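(* Let $k>0$ and let $f:\mathbb{R}^d\to\mathbb{R}$ be a scalar-valued neural network in $\mathcal{A}_k^{\infty}$, i.e. $f = l_{W_n,b_n}\circ \mathrm{ReLU}\circ l_{W_{n-1},b_{n-1}}\circ \cdots \circ \mathrm{ReLU}\circ l_{W_1,b_1}$ with $n\ge 2$ and $\prod_{i=1}^n \|W_i\|_\infty \le k$. Let $W_0\in\mathbb{R}^{d\times 1}$ and $b_0\in\mathbb{R}^d$ with $\|W_0\|_\infty = 1$, and define $h_{W_0,b_0}:\mathbb{R}\to\mathbb{R}$ by $h_{W_0,b_0} = f\circ l_{W_0,b_0}$. Then for any such choice of $W_0$ and $b_0$, $$I(h_{W_0,b_0}') \le 2k.$$
   Context: For a matrix $W$ and vector $b$, $l_{W,b}(x)=Wx+b$. $\mathrm{ReLU}$ is applied elementwise, $\mathrm{ReLU}(x)=\max(x,0)$. For a matrix $W$, $\|W\|_\infty=\sup_{x\ne 0}\|Wx\|_\infty/\|x\|_\infty$, which equals the maximum over rows of $W$ of the $\ell_1$ norm of the row. Derivatives are taken where they exist (the functions involved are piecewise linear), and $g(\pm\infty)$ denotes $\lim_{t\to\pm\infty} g(t)$. For $g:\mathbb{R}\to\mathbb{R}$, the total variation over $\mathbb{R}$ is $V_{-\infty}^{\infty}(g)=\sup_T\sum_{t_i\in T}|g(t_i)-g(t_{i-1})|$ over all finite partitions $T$, and the intrinsic variability of $g$ is $I(g)=V_{-\infty}^{\infty}(g)+|g(\infty)|+|g(-\infty)|$. *)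

theory Defs
  imports "HOL-Analysis.Analysis"
begin

text \<open>Vectors in R^m are represented as functions nat => real, only indices < m matter.
  A matrix with rows r and cols c is a function nat => nat => real (entry W i j).\<close>

definition relu :: "real \<Rightarrow> real" where
  "relu x = max x 0"

definition affine :: "nat \<Rightarrow> (nat \<Rightarrow> nat \<Rightarrow> real) \<Rightarrow> (nat \<Rightarrow> real) \<Rightarrow> (nat \<Rightarrow> real) \<Rightarrow> (nat \<Rightarrow> real)" where
  "affine cols W b x = (\<lambda>i. (\<Sum>j<cols. W i j * x j) + b i)"

definition mat_norm_inf :: "nat \<Rightarrow> nat \<Rightarrow> (nat \<Rightarrow> nat \<Rightarrow> real) \<Rightarrow> real" where
  "mat_norm_inf nr nc W = Max (insert 0 {(\<Sum>j<nc. \<bar>W i j\<bar>) | i. i < nr})"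

text \<open>Network with layer widths dims 0 (= input dim), ..., dims n;
  layer i (1 \<le> i \<le> n) has weight W i (dims i x dims (i-1)) and bias b i.
  net_layers dims W b j x = output of the j-th affine map (pre-activation).\<close>
fun net_layers :: "(nat \<Rightarrow> nat) \<Rightarrow> (nat \<Rightarrow> nat \<Rightarrow> nat \<Rightarrow> real) \<Rightarrow> (nat \<Rightarrow> nat \<Rightarrow> real)
    \<Rightarrow> nat \<Rightarrow> (nat \<Rightarrow> real) \<Rightarrow> (nat \<Rightarrow> real)" where
  "net_layers dims W b 0 x = x"
| "net_layers dims W b (Suc j) x =
     (if j = 0 then affine (dims 0) (W 1) (b 1) x
      else affine (dims j) (W (Suc j)) (b (Suc j)) (relu \<circ> net_layers dims W b j x))"

definition net :: "(nat \<Rightarrow> nat) \<Rightarrow> (nat \<Rightarrow> nat \<Rightarrow> nat \<Rightarrow> real) \<Rightarrow> (nat \<Rightarrow> nat \<Rightarrow> real)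
    \<Rightarrow> nat \<Rightarrow> (nat \<Rightarrow> real) \<Rightarrow> real" where
  "net dims W b n x = net_layers dims W b n x 0"

text \<open>Total variation over R of g, restricted to the set D where g is defined
  (here: the points where the derivative exists), as an extended real.\<close>
definition total_variation_on :: "real set \<Rightarrow> (real \<Rightarrow> real) \<Rightarrow> ereal" where
  "total_variation_on D g =
     (SUP ts \<in> {ts. sorted_wrt (<) ts \<and> set ts \<subseteq> D}.
        ereal (\<Sum>i<length ts - 1. \<bar>g (ts ! Suc i) - g (ts ! i)\<bar>))"

definition intrinsic_var_deriv :: "(real \<Rightarrow> real) \<Rightarrow> ereal" where
  "intrinsic_var_deriv h =
     total_variation_on {t. h differentiable (at t)} (deriv h)
     + ereal \<bar>Lim at_top (deriv h)\<bar> + ereal \<bar>Lim at_bot (deriv h)\<bar>"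

end

theory Submission
  imports Defs
begin

definition sl :: "(real \<Rightarrow> real) \<Rightarrow> real \<Rightarrow> real \<Rightarrow> real" where
  "sl g a b = (g b - g a) / (b - a)"

fun Qp :: "(real \<Rightarrow> real) \<Rightarrow> real \<Rightarrow> real list \<Rightarrow> real" where
  "Qp g p (a # b # ts) = \<bar>sl g a b - p\<bar> + Qp g (sl g a b) (b # ts)"
| "Qp g p [] = \<bar>p\<bar>"
| "Qp g p [a] = \<bar>p\<bar>"

definition GB :: "(real \<Rightarrow> real) \<Rightarrow> real \<Rightarrow> bool" where
  "GB g C \<longleftrightarrow> (\<forall>ts. sorted_wrt (<) ts \<longrightarrow> Qp g 0 ts \<le> C)"

lemma GB_nonneg: "GB g C \<Longrightarrow> 0 \<le> C"
  unfolding GB_def by (metis Qp.simps(2) abs_zero sorted_wrt.simps(1))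

lemma GB_mono: "GB g C \<Longrightarrow> C \<le> D \<Longrightarrow> GB g D"
  unfolding GB_def by force

lemma Qp_lip: "Qp g p ts \<le> \<bar>p - p'\<bar> + Qp g p' ts"
  by (cases "(g,p,ts)" rule: Qp.cases) auto

lemma Qp_refine:
  assumes "a < z" "z < b"
  shows "Qp f p (a # b # ys) \<le> Qp f p (a # z # b # ys)"
proof -
  define s where "s = sl f a b"
  define s1 where "s1 = sl f a z"
  define s2 where "s2 = sl f z b"
  define l where "l = (z - a) / (b - a)"
  have l01: "0 \<le> l" "l \<le> 1" using assms by (auto simp: l_def field_simps)
  have nz: "z - a \<noteq> 0" "b - z \<noteq> 0" "b - a \<noteq> 0" using assms by auto
  have t1: "l * s1 = (f z - f a) / (b - a)" using nz unfolding l_def s1_def sl_def by simp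
  have t2: "(1 - l) * s2 = (f b - f z) / (b - a)" proof -
    have "1 - l = (b - z) / (b - a)" using nz unfolding l_def by (simp add: field_simps)
    then show ?thesis using nz unfolding s2_def sl_def by simp
  qed
  have sc: "s = l * s1 + (1 - l) * s2"
    unfolding t1 t2 s_def sl_def by (simp add: diff_divide_distrib add_divide_distrib[symmetric])
  have e1: "\<bar>s - p\<bar> \<le> \<bar>s1 - p\<bar> + (1 - l) * \<bar>s2 - s1\<bar>"
  proof -
    have "s - p = (s1 - p) + (1 - l) * (s2 - s1)" using sc by (simp add: algebra_simps)
    then have "\<bar>s - p\<bar> \<le> \<bar>s1 - p\<bar> + \<bar>(1 - l) * (s2 - s1)\<bar>" by simp
    also have "\<bar>(1 - l) * (s2 - s1)\<bar> = (1 - l) * \<bar>s2 - s1\<bar>" using l01 by (simp add: abs_mult)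
    finally show ?thesis .
  qed
  have e2: "\<bar>s - s2\<bar> = l * \<bar>s2 - s1\<bar>"
  proof -
    have "s - s2 = l * (s1 - s2)" using sc by (simp add: algebra_simps)
    then show ?thesis using l01 by (simp add: abs_mult abs_minus_commute)
  qed
  have "Qp f p (a # b # ys) = \<bar>s - p\<bar> + Qp f s (b # ys)" by (simp add: s_def)
  also have "\<dots> \<le> \<bar>s - p\<bar> + \<bar>s - s2\<bar> + Qp f s2 (b # ys)" using Qp_lip[of f s "b # ys" s2] by simp
  also have "\<dots> \<le> \<bar>s1 - p\<bar> + \<bar>s2 - s1\<bar> + Qp f s2 (b # ys)" using e1 e2 by (simp add: algebra_simps)
  also have "\<dots> = Qp f p (a # z # b # ys)" by (simp add: s1_def s2_def)
  finally show ?thesis .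
qed

fun ss :: "(real \<Rightarrow> real) \<Rightarrow> real list \<Rightarrow> bool" where
  "ss g (a # b # ts) = (((g a \<ge> 0 \<and> g b \<ge> 0) \<or> (g a \<le> 0 \<and> g b \<le> 0)) \<and> ss g (b # ts))"
| "ss g _ = True"

lemma relu_ss:
  fixes g :: "real \<Rightarrow> real"
  defines "u \<equiv> \<lambda>t. relu (g t)"
  shows "sorted_wrt (<) ts \<Longrightarrow> ss g ts \<Longrightarrow> ts \<noteq> [] \<Longrightarrow>
    (g (hd ts) \<ge> 0 \<longrightarrow> (g (hd ts) = 0 \<longrightarrow> p \<le> 0) \<longrightarrow> Qp u p ts \<le> Qp g p ts) \<and>
    (g (hd ts) \<le> 0 \<longrightarrow> (g (hd ts) = 0 \<longrightarrow> p \<ge> 0) \<longrightarrow> Qp u 0 ts \<le> Qp g p ts + p)"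
proof (induction ts arbitrary: p rule: induct_list012)
  case 1 then show ?case by simp
next
  case (2 x) then show ?case by (auto simp: abs_if)
next
  case (3 a b zs)
  define s where "s = sl g a b"
  have ab: "a < b" using 3 by simp
  have ssb: "ss g (b # zs)" and sb: "sorted_wrt (<) (b # zs)" using 3 by auto
  have IH: "\<And>p. (g b \<ge> 0 \<longrightarrow> (g b = 0 \<longrightarrow> p \<le> 0) \<longrightarrow> Qp u p (b # zs) \<le> Qp g p (b # zs)) \<and>
    (g b \<le> 0 \<longrightarrow> (g b = 0 \<longrightarrow> p \<ge> 0) \<longrightarrow> Qp u 0 (b # zs) \<le> Qp g p (b # zs) + p)"
    using 3(2)[OF sb ssb] by simp
  have sgn: "(g a \<ge> 0 \<and> g b \<ge> 0) \<or> (g a \<le> 0 \<and> g b \<le> 0)" using 3 by simp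
  have Qg: "Qp g p (a # b # zs) = \<bar>s - p\<bar> + Qp g s (b # zs)" for p by (simp add: s_def)
  show ?case
  proof (cases "g a \<ge> 0 \<and> g b \<ge> 0")
    case True
    have us: "sl u a b = s" using True by (simp add: u_def relu_def s_def sl_def)
    have Qu: "Qp u p (a # b # zs) = \<bar>s - p\<bar> + Qp u s (b # zs)" for p using us by simp
    have sneg: "g b = 0 \<Longrightarrow> s \<le> 0" using True ab by (simp add: s_def sl_def divide_nonpos_pos)
    have i1: "Qp u s (b # zs) \<le> Qp g s (b # zs)" using IH[of s] True sneg by auto
    have c1: "Qp u p (a # b # zs) \<le> Qp g p (a # b # zs)" for p using i1 Qu Qg by simp
    have c2: "g a = 0 \<Longrightarrow> Qp u 0 (a # b # zs) \<le> Qp g p (a # b # zs) + p"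
    proof -
      assume ga: "g a = 0"
      have "Qp u 0 (a # b # zs) \<le> \<bar>s\<bar> + Qp g s (b # zs)" using Qu[of 0] i1 by simp
      also have "\<bar>s\<bar> \<le> \<bar>s - p\<bar> + p" if "s \<ge> 0" using that by linarith
      then have "\<bar>s\<bar> + Qp g s (b # zs) \<le> Qp g p (a # b # zs) + p"
        using ga True ab by (simp add: Qg s_def sl_def)
      finally show ?thesis .
    qed
    show ?thesis
    proof (intro conjI impI)
      show "Qp u p (a # b # zs) \<le> Qp g p (a # b # zs)" by (rule c1)
    next
      assume "g (hd (a # b # zs)) \<le> 0"
      then have "g a = 0" using True by simp
      then show "Qp u 0 (a # b # zs) \<le> Qp g p (a # b # zs) + p" by (rule c2)
    qed
  next
    case False
    then have F: "g a \<le> 0" "g b \<le> 0" using sgn by auto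
    have us: "sl u a b = 0" using F by (simp add: u_def relu_def sl_def)
    have Qu: "Qp u p (a # b # zs) = \<bar>p\<bar> + Qp u 0 (b # zs)" for p using us by simp
    have spos: "g b = 0 \<Longrightarrow> s \<ge> 0" using F ab by (simp add: s_def sl_def divide_nonneg_pos divide_nonpos_pos)
    have i2: "Qp u 0 (b # zs) \<le> Qp g s (b # zs) + s" using IH[of s] F spos by auto
    have c1: "g a \<ge> 0 \<Longrightarrow> p \<le> 0 \<Longrightarrow> Qp u p (a # b # zs) \<le> Qp g p (a # b # zs)"
      using i2 Qu Qg by (simp add: abs_if split: if_splits) linarith?
    have c2: "Qp u 0 (a # b # zs) \<le> Qp g p (a # b # zs) + p"
    proof -
      have "s \<le> \<bar>s - p\<bar> + p" by linarith
      then show ?thesis using Qu[of 0] i2 Qg by simp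
    qed
    show ?thesis
    proof (intro conjI impI)
      assume "g (hd (a # b # zs)) \<ge> 0" "g (hd (a # b # zs)) = 0 \<longrightarrow> p \<le> 0"
      then have "g a \<ge> 0" "p \<le> 0" using F by auto
      then show "Qp u p (a # b # zs) \<le> Qp g p (a # b # zs)" by (rule c1)
    next
      show "Qp u 0 (a # b # zs) \<le> Qp g p (a # b # zs) + p" by (rule c2)
    qed
  qed
qed

lemma zero_insert:
  fixes g :: "real \<Rightarrow> real"
  assumes cont: "continuous_on UNIV g"
  shows "sorted_wrt (<) ts \<Longrightarrow> \<exists>ts'. sorted_wrt (<) ts' \<and> ss g ts' \<and> hd ts' = hd ts \<and>
           (ts' = [] \<longleftrightarrow> ts = []) \<and> Qp f p ts \<le> Qp f p ts'"
proof (induction ts arbitrary: p rule: induct_list012)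
  case 1 then show ?case by (intro exI[of _ "[]"]) simp
next
  case (2 x) then show ?case by (intro exI[of _ "[x]"]) simp
next
  case (3 x y zs)
  have xy: "x < y" and sy: "sorted_wrt (<) (y # zs)" using 3 by auto
  obtain r where r: "sorted_wrt (<) r" "ss g r" "hd r = y" "r \<noteq> []"
     "Qp f (sl f x y) (y # zs) \<le> Qp f (sl f x y) r"
    using 3(2)[OF sy, of "sl f x y"] by auto
  then obtain rr where rr: "r = y # rr" by (cases r) auto
  have srt: "sorted_wrt (<) (y # rr)" using r rr by simp
  have srt2: "sorted_wrt (<) (x # y # rr)" using srt xy by auto
  have le1: "Qp f p (x # y # zs) \<le> Qp f p (x # y # rr)" using r(5) rr by simp
  show ?case
  proof (cases "(g x \<ge> 0 \<and> g y \<ge> 0) \<or> (g x \<le> 0 \<and> g y \<le> 0)")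
    case True
    then show ?thesis using srt2 r rr le1 by (intro exI[of _ "x # y # rr"]) simp
  next
    case False
    have "\<exists>z. x < z \<and> z < y \<and> g z = 0"
    proof (cases "g x < 0")
      case True
      then have "g y > 0" using False by auto
      then obtain z where "x \<le> z" "z \<le> y" "g z = 0"
        using IVT'[of g x 0 y] True xy continuous_on_subset[OF cont] by fastforce
      then show ?thesis using True \<open>g y > 0\<close> by (intro exI[of _ z]) (auto simp: order.order_iff_strict)
    next
      case nT: False
      then have "g y < 0" "g x > 0" using False by auto
      then obtain z where "x \<le> z" "z \<le> y" "g z = 0"
        using IVT2'[of g y 0 x] xy continuous_on_subset[OF cont] by fastforce
      then show ?thesis using \<open>g y < 0\<close> \<open>g x > 0\<close> by (intro exI[of _ z]) (auto simp: order.order_iff_strict)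
    qed
    then obtain z where z: "x < z" "z < y" "g z = 0" by blast
    have le2: "Qp f p (x # y # rr) \<le> Qp f p (x # z # y # rr)" by (rule Qp_refine[OF z(1,2)])
    have srt3: "sorted_wrt (<) (x # z # y # rr)" using srt z by auto
    have "ss g (x # z # y # rr)" using z r rr by auto
    then show ?thesis using srt3 le1 le2 by (intro exI[of _ "x # z # y # rr"]) simp
  qed
qed

lemma GB_relu:
  assumes "continuous_on UNIV g" "GB g C"
  shows "GB (\<lambda>t. relu (g t)) C"
  unfolding GB_def
proof (intro allI impI)
  fix ts :: "real list" assume st: "sorted_wrt (<) ts"
  let ?u = "\<lambda>t. relu (g t)"
  have C0: "0 \<le> C" using GB_nonneg assms(2) by blast
  show "Qp ?u 0 ts \<le> C"
  proof (cases "ts = []")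
    case True then show ?thesis using C0 by simp
  next
    case False
    obtain r where r: "sorted_wrt (<) r" "ss g r" "r \<noteq> []" "Qp ?u 0 ts \<le> Qp ?u 0 r"
      using zero_insert[OF assms(1) st, of ?u 0] False by auto
    have gr: "Qp g 0 r \<le> C" using assms(2) r(1) unfolding GB_def by blast
    have "Qp ?u 0 r \<le> Qp g 0 r"
      using relu_ss[OF r(1,2,3), of 0] by (cases "g (hd r) \<ge> 0") auto
    then show ?thesis using r(4) gr by linarith
  qed
qed

lemma sl_comb: "sl (\<lambda>t. (\<Sum>c<m. w c * g c t) + d) a b = (\<Sum>c<m. w c * sl (g c) a b)"
  unfolding sl_def by (simp add: sum_subtractf[symmetric] right_diff_distrib[symmetric] sum_divide_distrib)

lemma Qp_comb:
  "Qp (\<lambda>t. (\<Sum>c<m. w c * g c t) + d) (\<Sum>c<m. w c * p c) ts \<le> (\<Sum>c<m. \<bar>w c\<bar> * Qp (g c) (p c) ts)"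
proof (induction ts arbitrary: p rule: induct_list012)
  case 1 then show ?case by (simp add: abs_mult[symmetric])
next
  case (2 x) then show ?case by (simp add: abs_mult[symmetric])
next
  case (3 x y zs)
  let ?F = "\<lambda>t. (\<Sum>c<m. w c * g c t) + d"
  define s where "s c = sl (g c) x y" for c
  have "Qp ?F (\<Sum>c<m. w c * p c) (x # y # zs)
     = \<bar>(\<Sum>c<m. w c * s c) - (\<Sum>c<m. w c * p c)\<bar> + Qp ?F (\<Sum>c<m. w c * s c) (y # zs)"
    by (simp only: Qp.simps sl_comb s_def)
  also have "\<dots> \<le> (\<Sum>c<m. \<bar>w c\<bar> * \<bar>s c - p c\<bar>) + (\<Sum>c<m. \<bar>w c\<bar> * Qp (g c) (s c) (y # zs))"
  proof (rule add_mono)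
    have "\<bar>(\<Sum>c<m. w c * s c) - (\<Sum>c<m. w c * p c)\<bar> = \<bar>\<Sum>c<m. w c * (s c - p c)\<bar>"
      by (simp add: sum_subtractf right_diff_distrib)
    also have "\<dots> \<le> (\<Sum>c<m. \<bar>w c * (s c - p c)\<bar>)" by (rule sum_abs)
    finally show "\<bar>(\<Sum>c<m. w c * s c) - (\<Sum>c<m. w c * p c)\<bar> \<le> (\<Sum>c<m. \<bar>w c\<bar> * \<bar>s c - p c\<bar>)"
      by (simp add: abs_mult)
    show "Qp ?F (\<Sum>c<m. w c * s c) (y # zs) \<le> (\<Sum>c<m. \<bar>w c\<bar> * Qp (g c) (s c) (y # zs))"
      by (rule 3(2))
  qed
  also have "\<dots> = (\<Sum>c<m. \<bar>w c\<bar> * Qp (g c) (p c) (x # y # zs))"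
    by (simp add: s_def sum.distrib[symmetric] distrib_left)
  finally show ?case .
qed

lemma GB_comb:
  assumes "\<And>c. c < m \<Longrightarrow> GB (g c) C"
  shows "GB (\<lambda>t. (\<Sum>c<m. w c * g c t) + d) ((\<Sum>c<m. \<bar>w c\<bar>) * C)"
  unfolding GB_def
proof (intro allI impI)
  fix ts :: "real list" assume st: "sorted_wrt (<) ts"
  have "Qp (\<lambda>t. (\<Sum>c<m. w c * g c t) + d) 0 ts = Qp (\<lambda>t. (\<Sum>c<m. w c * g c t) + d) (\<Sum>c<m. w c * 0) ts"
    by simp
  also have "\<dots> \<le> (\<Sum>c<m. \<bar>w c\<bar> * Qp (g c) 0 ts)" by (rule Qp_comb)
  also have "\<dots> \<le> (\<Sum>c<m. \<bar>w c\<bar> * C)"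
    by (rule sum_mono, rule mult_left_mono) (use assms st in \<open>auto simp: GB_def\<close>)
  finally show "Qp (\<lambda>t. (\<Sum>c<m. w c * g c t) + d) 0 ts \<le> (\<Sum>c<m. \<bar>w c\<bar>) * C"
    by (simp add: sum_distrib_right)
qed

lemma Qp_affine: "sorted_wrt (<) ts \<Longrightarrow> Qp (\<lambda>t. \<alpha> * t + \<beta>) p ts \<le> \<bar>\<alpha> - p\<bar> + \<bar>\<alpha>\<bar>"
proof (induction ts arbitrary: p rule: induct_list012)
  case (3 x y zs)
  have "sl (\<lambda>t. \<alpha> * t + \<beta>) x y = \<alpha>" using 3(3) by (simp add: sl_def right_diff_distrib[symmetric])
  then show ?case using 3(2)[of \<alpha>] 3(3) by simp
qed (auto simp: abs_if)

lemma GB_affine: "GB (\<lambda>t. \<alpha> * t + \<beta>) (2 * \<bar>\<alpha>\<bar>)"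
  unfolding GB_def using Qp_affine[of _ \<alpha> \<beta> 0] by simp

fun V :: "real list \<Rightarrow> real" where
  "V (x # y # xs) = \<bar>y - x\<bar> + V (y # xs)"
| "V [] = 0"
| "V [x] = 0"

lemma sum_V: "(\<Sum>i<length ts - 1. \<bar>f (ts ! Suc i) - f (ts ! i)\<bar>) = V (map f ts)"
proof (induction ts rule: induct_list012)
  case (3 x y zs)
  then show ?case by (simp del: sum.lessThan_Suc add: sum.lessThan_Suc_shift)
qed auto

lemma V_Cons: "V xs \<le> V (a # xs)"
  by (cases xs) auto

lemma V_tendsto:
  "(\<And>t. t \<in> set ts \<Longrightarrow> ((\<lambda>d. f d t) \<longlongrightarrow> g t) F) \<Longrightarrow> ((\<lambda>d. V (map (f d) ts)) \<longlongrightarrow> V (map g ts)) F"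
proof (induction ts rule: induct_list012)
  case (3 x y zs)
  have "((\<lambda>d. V (map (f d) (y # zs))) \<longlongrightarrow> V (map g (y # zs))) F" using 3 by simp
  moreover have "((\<lambda>d. \<bar>f d y - f d x\<bar>) \<longlongrightarrow> \<bar>g y - g x\<bar>) F"
    by (intro tendsto_intros) (use 3 in auto)
  ultimately show ?case by (simp add: tendsto_add)
qed auto

fun il :: "real \<Rightarrow> real list \<Rightarrow> real list" where
  "il d [] = []"
| "il d (t # ts) = t # (t + d) # il d ts"

lemma set_il: "set (il d ts) = set ts \<union> (\<lambda>t. t + d) ` set ts"
  by (induction ts) auto

lemma sorted_il:
  "sorted_wrt (<) ts \<Longrightarrow> d > 0 \<Longrightarrow> (\<forall>x\<in>set ts. \<forall>y\<in>set ts. x < y \<longrightarrow> x + d < y) \<Longrightarrow>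
   sorted_wrt (<) E \<Longrightarrow> (\<forall>x\<in>set ts. \<forall>e\<in>set E. x + d < e) \<Longrightarrow> sorted_wrt (<) (il d ts @ E)"
proof (induction ts)
  case Nil then show ?case by simp
next
  case (Cons t ts)
  have "sorted_wrt (<) (il d ts @ E)" using Cons by simp
  moreover have "\<forall>y\<in>set (il d ts @ E). t + d < y"
    using Cons.prems by (auto simp: set_il)
  moreover have "\<forall>y\<in>set (il d ts @ E). t < y"
    using Cons.prems by (force simp: set_il)
  ultimately show ?case using Cons.prems by simp
qed

lemma LB:
  assumes "sl h R R' = ap"
  shows "V (p # map (\<lambda>t. sl h t (t + d)) ts) + \<bar>ap\<bar> \<le> Qp h p (q # il d ts @ [R, R'])"
  using assms
proof (induction ts arbitrary: p q)
  case Nil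
  then show ?case by simp
next
  case (Cons t ts)
  define s0 where "s0 = sl h q t"
  define e where "e = sl h t (t + d)"
  have IH: "V (e # map (\<lambda>t. sl h t (t + d)) ts) + \<bar>ap\<bar> \<le> Qp h e ((t + d) # il d ts @ [R, R'])"
    using Cons by blast
  have "Qp h p (q # il d (t # ts) @ [R, R']) = \<bar>s0 - p\<bar> + \<bar>e - s0\<bar> + Qp h e ((t + d) # il d ts @ [R, R'])"
    by (simp add: s0_def e_def)
  moreover have "V (p # map (\<lambda>t. sl h t (t + d)) (t # ts)) = \<bar>e - p\<bar> + V (e # map (\<lambda>t. sl h t (t + d)) ts)"
    by (simp add: e_def)
  moreover have "\<bar>e - p\<bar> \<le> \<bar>s0 - p\<bar> + \<bar>e - s0\<bar>" by linarith
  ultimately show ?case using IH by linarith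
qed

definition EA :: "real filter \<Rightarrow> (real \<Rightarrow> real) \<Rightarrow> bool" where
  "EA F g \<longleftrightarrow> (\<exists>a c. eventually (\<lambda>t. g t = a * t + c) F)"

lemma final:
  assumes G: "GB h C" and top: "eventually (\<lambda>t. h t = ap * t + cp) at_top"
    and bot: "eventually (\<lambda>t. h t = am * t + cm) at_bot"
  shows "intrinsic_var_deriv h \<le> ereal C"
proof -
  obtain Tp where Tp: "\<And>t. t \<ge> Tp \<Longrightarrow> h t = ap * t + cp" using top by (auto simp: eventually_at_top_linorder)
  obtain Tm where Tm: "\<And>t. t \<le> Tm \<Longrightarrow> h t = am * t + cm" using bot by (auto simp: eventually_at_bot_linorder)
  have dp: "deriv h t = ap" if "t > Tp" for t
  proof -
    have "((\<lambda>t. ap * t + cp) has_real_derivative ap) (at t)" by (auto intro!: derivative_eq_intros)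
    then have "(h has_real_derivative ap) (at t)"
      by (rule has_field_derivative_transform_within_open[where S = "{Tp<..}"]) (use that Tp in auto)
    then show ?thesis by (rule DERIV_imp_deriv)
  qed
  have dm: "deriv h t = am" if "t < Tm" for t
  proof -
    have "((\<lambda>t. am * t + cm) has_real_derivative am) (at t)" by (auto intro!: derivative_eq_intros)
    then have "(h has_real_derivative am) (at t)"
      by (rule has_field_derivative_transform_within_open[where S = "{..<Tm}"]) (use that Tm in auto)
    then show ?thesis by (rule DERIV_imp_deriv)
  qed
  have Lp: "Lim at_top (deriv h) = ap"
    by (rule tendsto_Lim) (auto intro!: tendsto_eventually eventually_mono[OF eventually_gt_at_top[of Tp]] dp)
  have Lm: "Lim at_bot (deriv h) = am"
    by (rule tendsto_Lim) (auto intro!: tendsto_eventually eventually_mono[OF eventually_gt_at_bot[of Tm]] dm)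
  have TV: "V (map (deriv h) ts) \<le> C - \<bar>am\<bar> - \<bar>ap\<bar>"
    if st: "sorted_wrt (<) ts" and sD: "set ts \<subseteq> {t. h differentiable (at t)}" for ts
  proof -
    define L where "L = min Tm (Min (insert 0 (set ts))) - 1"
    define R where "R = max Tp (Max (insert 0 (set ts)) + 1)"
    have Lx: "L < x" if "x \<in> set ts" for x
    proof -
      have "Min (insert 0 (set ts)) \<le> x" using that by simp
      then show ?thesis unfolding L_def by linarith
    qed
    have Rx: "x + 1 \<le> R" if "x \<in> set ts" for x
    proof -
      have "x \<le> Max (insert 0 (set ts))" using that by simp
      then show ?thesis unfolding R_def by linarith
    qed
    have "Tp \<le> R" "Tp \<le> R + 1" unfolding R_def by auto
    then have "h R = ap * R + cp" "h (R + 1) = ap * (R + 1) + cp" using Tp by auto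
    then have slR: "sl h R (R + 1) = ap" unfolding sl_def by (simp add: algebra_simps)
    have "L \<le> Tm" "L - 1 \<le> Tm" unfolding L_def by auto
    then have "h L = am * L + cm" "h (L - 1) = am * (L - 1) + cm" using Tm by auto
    then have slL: "sl h (L - 1) L = am" unfolding sl_def by (simp add: algebra_simps)
    define f where "f d t = sl h t (t + d)" for d t
    have ev: "eventually (\<lambda>d. (0 < d \<and> d < 1) \<and> (\<forall>p\<in>set ts \<times> set ts. fst p < snd p \<longrightarrow> d < snd p - fst p)) (at_right (0::real))"
    proof (rule eventually_conj)
      show "eventually (\<lambda>d. 0 < d \<and> d < 1) (at_right (0::real))"
        unfolding eventually_at_right_field by (intro exI[of _ 1]) auto
      show "eventually (\<lambda>d. \<forall>p\<in>set ts \<times> set ts. fst p < snd p \<longrightarrow> d < snd p - fst p) (at_right (0::real))"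
      proof (rule eventually_ball_finite)
        show "\<forall>p\<in>set ts \<times> set ts. eventually (\<lambda>d. fst p < snd p \<longrightarrow> d < snd p - fst p) (at_right (0::real))"
        proof
          fix p :: "real \<times> real"
          show "eventually (\<lambda>d. fst p < snd p \<longrightarrow> d < snd p - fst p) (at_right (0::real))"
          proof (cases "fst p < snd p")
            case True
            then show ?thesis unfolding eventually_at_right_field by (intro exI[of _ "snd p - fst p"]) auto
          qed simp
        qed
      qed simp
    qed
    have bound: "eventually (\<lambda>d. V (map (f d) ts) \<le> C - \<bar>am\<bar> - \<bar>ap\<bar>) (at_right 0)"
    proof (rule eventually_mono[OF ev])
      fix d :: real
      assume a: "(0 < d \<and> d < 1) \<and> (\<forall>p\<in>set ts \<times> set ts. fst p < snd p \<longrightarrow> d < snd p - fst p)"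
      let ?P = "(L - 1) # L # il d ts @ [R, R + 1]"
      have s1: "sorted_wrt (<) (il d ts @ [R, R + 1])"
        by (rule sorted_il) (use a st Rx in force)+
      have LR: "L < R"
      proof -
        have "Min (insert 0 (set ts)) \<le> 0" "0 \<le> Max (insert 0 (set ts))" by auto
        then show ?thesis unfolding L_def R_def by linarith
      qed
      have Lx': "\<forall>x\<in>set ts. L < x \<and> L < x + d" using Lx a by force
      have "sorted_wrt (<) ?P" using s1 LR Lx' a by (auto simp: set_il)
      then have "Qp h 0 ?P \<le> C" using G unfolding GB_def by blast
      moreover have "Qp h 0 ?P = \<bar>am\<bar> + Qp h am (L # il d ts @ [R, R + 1])" using slL by simp
      moreover have "V (am # map (f d) ts) + \<bar>ap\<bar> \<le> Qp h am (L # il d ts @ [R, R + 1])"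
        unfolding f_def by (rule LB[OF slR])
      moreover have "V (map (f d) ts) \<le> V (am # map (f d) ts)" by (rule V_Cons)
      ultimately show "V (map (f d) ts) \<le> C - \<bar>am\<bar> - \<bar>ap\<bar>" by linarith
    qed
    have lim: "((\<lambda>d. V (map (f d) ts)) \<longlongrightarrow> V (map (deriv h) ts)) (at_right 0)"
    proof (rule V_tendsto)
      fix t assume "t \<in> set ts"
      then have "h differentiable (at t)" using sD by auto
      then have "DERIV h t :> deriv h t" by (simp add: DERIV_deriv_iff_real_differentiable)
      then have "((\<lambda>d. (h (t + d) - h t) / d) \<longlongrightarrow> deriv h t) (at 0)" by (rule DERIV_D)
      then have "((\<lambda>d. (h (t + d) - h t) / d) \<longlongrightarrow> deriv h t) (at_right 0)"
        by (simp add: filterlim_at_split)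
      then show "((\<lambda>d. f d t) \<longlongrightarrow> deriv h t) (at_right 0)" by (simp add: f_def sl_def)
    qed
    show ?thesis by (rule tendsto_upperbound[OF lim bound]) simp
  qed
  have "total_variation_on {t. h differentiable (at t)} (deriv h) \<le> ereal (C - \<bar>am\<bar> - \<bar>ap\<bar>)"
    unfolding total_variation_on_def
  proof (rule SUP_least)
    fix ts assume "ts \<in> {ts. sorted_wrt (<) ts \<and> set ts \<subseteq> {t. h differentiable (at t)}}"
    then show "ereal (\<Sum>i<length ts - 1. \<bar>deriv h (ts ! Suc i) - deriv h (ts ! i)\<bar>) \<le> ereal (C - \<bar>am\<bar> - \<bar>ap\<bar>)"
      using TV[of ts] sum_V[of "deriv h" ts] by simp
  qed
  then have "intrinsic_var_deriv h \<le> ereal (C - \<bar>am\<bar> - \<bar>ap\<bar>) + ereal \<bar>ap\<bar> + ereal \<bar>am\<bar>"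
    unfolding intrinsic_var_deriv_def Lp Lm by (intro add_right_mono)
  then show ?thesis by simp
qed

lemma EA_affine: "EA F (\<lambda>t. a * t + c)"
  unfolding EA_def by (intro exI[of _ a] exI[of _ c]) simp

lemma EA_comb:
  fixes m :: nat
  assumes "\<And>c. c < m \<Longrightarrow> EA F (g c)"
  shows "EA F (\<lambda>t. (\<Sum>c<m. w c * g c t) + d)"
proof -
  have "\<forall>c. \<exists>ac. c < m \<longrightarrow> eventually (\<lambda>t. g c t = fst ac * t + snd ac) F"
    using assms unfolding EA_def by fastforce
  then obtain ac where ac: "\<And>c. c < m \<Longrightarrow> eventually (\<lambda>t. g c t = fst (ac c) * t + snd (ac c)) F"
    by metis
  have "eventually (\<lambda>t. \<forall>c\<in>{..<m}. g c t = fst (ac c) * t + snd (ac c)) F"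
    by (rule eventually_ball_finite) (use ac in auto)
  then have "eventually (\<lambda>t. (\<Sum>c<m. w c * g c t) + d = (\<Sum>c<m. w c * fst (ac c)) * t + ((\<Sum>c<m. w c * snd (ac c)) + d)) F"
    by (rule eventually_mono) (simp add: sum_distrib_right sum_distrib_left distrib_left sum.distrib algebra_simps)
  then show ?thesis unfolding EA_def by blast
qed

lemma EA_relu:
  assumes hF: "\<And>a c. a \<noteq> 0 \<Longrightarrow> eventually (\<lambda>t. a * t + c > 0) F \<or> eventually (\<lambda>t. a * t + c < 0) F"
    and "EA F g"
  shows "EA F (\<lambda>t. relu (g t))"
proof -
  obtain a c where ev: "eventually (\<lambda>t. g t = a * t + c) F" using assms(2) unfolding EA_def by blast
  show ?thesis
  proof (cases "a = 0")
    case True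
    have "eventually (\<lambda>t. relu (g t) = 0 * t + relu c) F" by (rule eventually_mono[OF ev]) (simp add: True)
    then show ?thesis unfolding EA_def by blast
  next
    case False
    from hF[OF False, of c] show ?thesis
    proof
      assume p: "eventually (\<lambda>t. a * t + c > 0) F"
      have "eventually (\<lambda>t. relu (g t) = a * t + c) F"
        by (rule eventually_mono[OF eventually_conj[OF ev p]]) (simp add: relu_def)
      then show ?thesis unfolding EA_def by blast
    next
      assume p: "eventually (\<lambda>t. a * t + c < 0) F"
      have "eventually (\<lambda>t. relu (g t) = 0 * t + 0) F"
        by (rule eventually_mono[OF eventually_conj[OF ev p]]) (simp add: relu_def)
      then show ?thesis unfolding EA_def by blast
    qed
  qed
qed

lemma top_sign: "a \<noteq> 0 \<Longrightarrow> eventually (\<lambda>t. a * t + c > 0) at_top \<or> eventually (\<lambda>t. a * t + c < 0) at_top"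
  for a c :: real
proof (cases "a > 0")
  case True
  have "eventually (\<lambda>t. a * t + c > 0) at_top"
    by (rule eventually_mono[OF eventually_gt_at_top[of "- c / a"]]) (use True in \<open>simp add: field_simps\<close>)
  then show ?thesis by blast
next
  case False
  assume "a \<noteq> 0"
  then have a: "a < 0" using False by simp
  have "eventually (\<lambda>t. a * t + c < 0) at_top"
    by (rule eventually_mono[OF eventually_gt_at_top[of "- c / a"]]) (use a in \<open>simp add: field_simps\<close>)
  then show ?thesis by blast
qed

lemma bot_sign: "a \<noteq> 0 \<Longrightarrow> eventually (\<lambda>t. a * t + c > 0) at_bot \<or> eventually (\<lambda>t. a * t + c < 0) at_bot"
  for a c :: real
proof (cases "a > 0")
  case True
  have "eventually (\<lambda>t. a * t + c < 0) at_bot"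
    by (rule eventually_mono[OF eventually_gt_at_bot[of "- c / a"]]) (use True in \<open>simp add: field_simps\<close>)
  then show ?thesis by blast
next
  case False
  assume "a \<noteq> 0"
  then have a: "a < 0" using False by simp
  have "eventually (\<lambda>t. a * t + c > 0) at_bot"
    by (rule eventually_mono[OF eventually_gt_at_bot[of "- c / a"]]) (use a in \<open>simp add: field_simps\<close>)
  then show ?thesis by blast
qed

lemma cont_comb:
  fixes m :: nat and g :: "nat \<Rightarrow> real \<Rightarrow> real"
  assumes "\<And>c. c < m \<Longrightarrow> continuous_on UNIV (g c)"
  shows "continuous_on UNIV (\<lambda>t. (\<Sum>c<m. w c * g c t) + d)"
  by (intro continuous_intros) (use assms in auto)

lemma cont_relu: "continuous_on UNIV g \<Longrightarrow> continuous_on UNIV (\<lambda>t. relu (g t))"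
  unfolding relu_def by (intro continuous_intros)

lemma row_le: "i < nr \<Longrightarrow> (\<Sum>j<nc. \<bar>W i j\<bar>) \<le> mat_norm_inf nr nc W"
proof -
  assume i: "i < nr"
  have eq: "{(\<Sum>j<nc. \<bar>W i j\<bar>) | i. i < nr} = (\<lambda>i. \<Sum>j<nc. \<bar>W i j\<bar>) ` {..<nr}" by auto
  show ?thesis unfolding mat_norm_inf_def eq by (rule Max_ge) (use i in auto)
qed

lemma mat_norm_nonneg: "0 \<le> mat_norm_inf nr nc W"
  unfolding mat_norm_inf_def by (rule Max_ge_iff[THEN iffD2]) auto

lemma layers:
  fixes dims :: "nat \<Rightarrow> nat" and W :: "nat \<Rightarrow> nat \<Rightarrow> nat \<Rightarrow> real" and b :: "nat \<Rightarrow> nat \<Rightarrow> real"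
    and w0 b0 :: "nat \<Rightarrow> real"
  assumes w0: "\<And>c. c < dims 0 \<Longrightarrow> \<bar>w0 c\<bar> \<le> 1"
  shows "1 \<le> j \<Longrightarrow> i < dims j \<Longrightarrow>
    continuous_on UNIV (\<lambda>t. net_layers dims W b j (\<lambda>i. w0 i * t + b0 i) i) \<and>
    EA at_top (\<lambda>t. net_layers dims W b j (\<lambda>i. w0 i * t + b0 i) i) \<and>
    EA at_bot (\<lambda>t. net_layers dims W b j (\<lambda>i. w0 i * t + b0 i) i) \<and>
    GB (\<lambda>t. net_layers dims W b j (\<lambda>i. w0 i * t + b0 i) i) (2 * (\<Prod>l=1..j. mat_norm_inf (dims l) (dims (l - 1)) (W l)))"
proof (induction j arbitrary: i)
  case 0 then show ?case by simp
next
  case (Suc j)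
  let ?N = "\<lambda>l. mat_norm_inf (dims l) (dims (l - 1)) (W l)"
  show ?case
  proof (cases "j = 0")
    case True
    let ?g = "\<lambda>c t. w0 c * t + b0 c"
    have eq: "(\<lambda>t. net_layers dims W b (Suc j) (\<lambda>i. w0 i * t + b0 i) i)
       = (\<lambda>t. (\<Sum>c<dims 0. W 1 i c * ?g c t) + b 1 i)"
      using True by (simp add: affine_def)
    have c1: "continuous_on UNIV (\<lambda>t. (\<Sum>c<dims 0. W 1 i c * ?g c t) + b 1 i)"
      by (rule cont_comb) (intro continuous_intros)
    have e1: "EA F (\<lambda>t. (\<Sum>c<dims 0. W 1 i c * ?g c t) + b 1 i)" for F
      by (rule EA_comb) (rule EA_affine)
    have g1: "GB (\<lambda>t. (\<Sum>c<dims 0. W 1 i c * ?g c t) + b 1 i) ((\<Sum>c<dims 0. \<bar>W 1 i c\<bar>) * 2)"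
    proof (rule GB_comb)
      fix c assume "c < dims 0"
      then show "GB (?g c) 2" using GB_mono[OF GB_affine[of "w0 c" "b0 c"]] w0 by auto
    qed
    have "(\<Sum>c<dims 0. \<bar>W 1 i c\<bar>) * 2 \<le> 2 * (\<Prod>l=1..Suc j. ?N l)"
      using row_le[where i=i and nr="dims 1" and nc="dims 0" and W="W 1"] Suc.prems True by simp
    then show ?thesis unfolding eq using c1 e1 g1 GB_mono by blast
  next
    case False
    then have j1: "1 \<le> j" by simp
    let ?f = "\<lambda>c t. net_layers dims W b j (\<lambda>i. w0 i * t + b0 i) c"
    let ?g = "\<lambda>c t. relu (?f c t)"
    have eq: "(\<lambda>t. net_layers dims W b (Suc j) (\<lambda>i. w0 i * t + b0 i) i)
       = (\<lambda>t. (\<Sum>c<dims j. W (Suc j) i c * ?g c t) + b (Suc j) i)"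
      using False by (simp add: affine_def)
    have IH: "\<And>c. c < dims j \<Longrightarrow> continuous_on UNIV (?f c) \<and> EA at_top (?f c) \<and> EA at_bot (?f c) \<and>
       GB (?f c) (2 * (\<Prod>l=1..j. ?N l))"
      using Suc.IH j1 by blast
    have c1: "continuous_on UNIV (\<lambda>t. (\<Sum>c<dims j. W (Suc j) i c * ?g c t) + b (Suc j) i)"
      by (rule cont_comb) (use IH cont_relu in blast)
    have e1: "EA at_top (\<lambda>t. (\<Sum>c<dims j. W (Suc j) i c * ?g c t) + b (Suc j) i)"
      by (rule EA_comb) (use IH EA_relu[OF top_sign] in blast)
    have e2: "EA at_bot (\<lambda>t. (\<Sum>c<dims j. W (Suc j) i c * ?g c t) + b (Suc j) i)"
      by (rule EA_comb) (use IH EA_relu[OF bot_sign] in blast)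
    have g1: "GB (\<lambda>t. (\<Sum>c<dims j. W (Suc j) i c * ?g c t) + b (Suc j) i)
        ((\<Sum>c<dims j. \<bar>W (Suc j) i c\<bar>) * (2 * (\<Prod>l=1..j. ?N l)))"
      by (rule GB_comb) (use IH GB_relu in blast)
    have P0: "0 \<le> (\<Prod>l=1..j. ?N l)" by (intro prod_nonneg) (simp add: mat_norm_nonneg)
    have "(\<Sum>c<dims j. \<bar>W (Suc j) i c\<bar>) * (2 * (\<Prod>l=1..j. ?N l)) \<le> ?N (Suc j) * (2 * (\<Prod>l=1..j. ?N l))"
      by (rule mult_right_mono) (use row_le[where i=i and nr="dims (Suc j)" and nc="dims j" and W="W (Suc j)"] Suc.prems P0 in auto)
    also have "\<dots> = 2 * (\<Prod>l=1..Suc j. ?N l)" by (simp add: prod.nat_ivl_Suc')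
    finally show ?thesis unfolding eq using c1 e1 e2 g1 GB_mono by blast
  qed
qed

theorem theorem1:
  fixes k :: real and n :: nat and dims :: "nat \<Rightarrow> nat"
    and W :: "nat \<Rightarrow> nat \<Rightarrow> nat \<Rightarrow> real" and b :: "nat \<Rightarrow> nat \<Rightarrow> real"
    and w0 :: "nat \<Rightarrow> real" and b0 :: "nat \<Rightarrow> real"
  assumes "k > 0"
    and "n \<ge> 2"
    and "dims n = 1"
    and "(\<Prod>i=1..n. mat_norm_inf (dims i) (dims (i - 1)) (W i)) \<le> k"
    and "mat_norm_inf (dims 0) 1 (\<lambda>i j. w0 i) = 1"
  shows "intrinsic_var_deriv (\<lambda>t. net dims W b n (\<lambda>i. w0 i * t + b0 i)) \<le> ereal (2 * k)"
proof -
  have w0: "\<bar>w0 c\<bar> \<le> 1" if "c < dims 0" for c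
    using row_le[OF that, where nc=1 and W="\<lambda>i j. w0 i"] assms(5) by simp
  have L: "continuous_on UNIV (\<lambda>t. net_layers dims W b n (\<lambda>i. w0 i * t + b0 i) 0) \<and>
    EA at_top (\<lambda>t. net_layers dims W b n (\<lambda>i. w0 i * t + b0 i) 0) \<and>
    EA at_bot (\<lambda>t. net_layers dims W b n (\<lambda>i. w0 i * t + b0 i) 0) \<and>
    GB (\<lambda>t. net_layers dims W b n (\<lambda>i. w0 i * t + b0 i) 0) (2 * (\<Prod>l=1..n. mat_norm_inf (dims l) (dims (l - 1)) (W l)))"
    by (rule layers[OF w0]) (use assms(2,3) in auto)
  have h: "(\<lambda>t. net dims W b n (\<lambda>i. w0 i * t + b0 i)) = (\<lambda>t. net_layers dims W b n (\<lambda>i. w0 i * t + b0 i) 0)"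
    by (simp add: net_def)
  have G: "GB (\<lambda>t. net_layers dims W b n (\<lambda>i. w0 i * t + b0 i) 0) (2 * k)"
    using L GB_mono assms(4) by fastforce
  obtain ap cp where top: "eventually (\<lambda>t. net_layers dims W b n (\<lambda>i. w0 i * t + b0 i) 0 = ap * t + cp) at_top"
    using L unfolding EA_def by blast
  obtain am cm where bot: "eventually (\<lambda>t. net_layers dims W b n (\<lambda>i. w0 i * t + b0 i) 0 = am * t + cm) at_bot"
    using L unfolding EA_def by blast
  show ?thesis unfolding h by (rule final[OF G top bot])
qed

end
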